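(* Let $\mathbb{F}_2=\langle a\rangle\ast\langle b\rangle$ and let $f=f_A\ast f_B$ be a split quasimorphism with bounded factors $f_A,f_B$. Then $f$ is at bounded distance from the (pointwise convergent) sum \[ \sum_{k=1}^\infty f_A(a^k)C_{a,k}+f_B(b^k)C_{b,k}, \] which is a quasimorphism; in particular $\widehat f=\sum_{k=1}^\infty f_A(a^k)\widehat{C}_{a,k}+f_B(b^k)\widehat{C}_{b,k}$. Furthermore, if $f_A$ and $f_B$ have finite support, then $f$ is at bounded distance from a finite linear combination of counting quasimorphisms.
   Context: $f_A:\langle a\rangle\to\mathbb{R}$, $f_B:\langle b\rangle\to\mathbb{R}$ are bounded and alternating ($f(x^{-1})=-f(x)$); each non-trivial element of $\mathbb{F}_2$ has a unique normal form $a^{k_1}b^{l_1}\cdots a^{k_m}b^{l_m}$ with all exponents non-zero except possibly $k_1$ or $l_m$, and $f(1)=0$, $f(a^{k_1}b^{l_1}\cdots)=f_A(a^{k_1})+f_B(b^{l_1})+\dots+f_A(a^{k_m})+f_B(b^{l_m})$. For $w,g\in\mathbb{F}_2$, $h_w(g)$ is the number of occurrences (overlaps allowed) of the reduced word $w$ as a subword of the reduced word $g$ over $a^{\pm1},b^{\pm1}$ ($h_w(g)=0$ if $w$ or $g$ is trivial), and the counting quasimorphism is $C_w=h_w-h_{w^{-1}}$. For $k\geq1$: $C_{a,k}=C_{ba^kb}+C_{ba^kb^{-1}}+C_{b^{-1}a^kb}+C_{b^{-1}a^kb^{-1}}$ and $C_{b,k}=C_{ab^ka}+C_{ab^ka^{-1}}+C_{a^{-1}b^ka}+C_{a^{-1}b^ka^{-1}}$.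 Hats denote homogenization $\widehat F(g)=\lim_{n\to\infty}F(g^n)/n$. *)

theory Defs
  imports Complex_Main
begin

datatype gen = GA | GB

text \<open>A letter is a generator together with a flag: True means the inverse letter.\<close>
type_synonym letter = "gen \<times> bool"

definition inv_letter :: "letter \<Rightarrow> letter" where
  "inv_letter l = (fst l, \<not> snd l)"

definition reduced :: "letter list \<Rightarrow> bool" where
  "reduced xs = successively (\<lambda>x y. y \<noteq> inv_letter x) xs"

fun red_cons :: "letter \<Rightarrow> letter list \<Rightarrow> letter list" where
  "red_cons x [] = [x]"
| "red_cons x (y # ys) = (if y = inv_letter x then ys else x # y # ys)"

definition reduce :: "letter list \<Rightarrow> letter list" where
  "reduce xs = foldr red_cons xs []"

definition fmult :: "letter list \<Rightarrow> letter list \<Rightarrow> letter list" where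
  "fmult g h = reduce (g @ h)"

definition fpow :: "letter list \<Rightarrow> nat \<Rightarrow> letter list" where
  "fpow g n = (fmult g ^^ n) []"

definition finv :: "letter list \<Rightarrow> letter list" where
  "finv w = rev (map inv_letter w)"

definition apow :: "nat \<Rightarrow> letter list" where
  "apow k = replicate k (GA, False)"
definition bpow :: "nat \<Rightarrow> letter list" where
  "bpow k = replicate k (GB, False)"

abbreviation la :: "letter list" where "la \<equiv> [(GA, False)]"
abbreviation laI :: "letter list" where "laI \<equiv> [(GA, True)]"
abbreviation lb :: "letter list" where "lb \<equiv> [(GB, False)]"
abbreviation lbI :: "letter list" where "lbI \<equiv> [(GB, True)]"

definition lsgn :: "letter \<Rightarrow> int" where
  "lsgn l = (if snd l then -1 else 1)"

text \<open>Syllable decomposition: maximal runs of the same generator, with total exponent.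
  For a reduced word this is the normal form a^k1 b^l1 ... a^km b^lm (nonzero exponents).\<close>
fun syl :: "letter list \<Rightarrow> (gen \<times> int) list" where
  "syl [] = []"
| "syl (l # ls) = (case syl ls of
      [] \<Rightarrow> [(fst l, lsgn l)]
    | (x, k) # rest \<Rightarrow> (if x = fst l then (x, k + lsgn l) # rest
                       else (fst l, lsgn l) # (x, k) # rest))"

text \<open>fA k stands for f_A(a^k), fB k for f_B(b^k).\<close>
definition split_qm :: "(int \<Rightarrow> real) \<Rightarrow> (int \<Rightarrow> real) \<Rightarrow> letter list \<Rightarrow> real" where
  "split_qm fA fB g = sum_list (map (\<lambda>(x, k). if x = GA then fA k else fB k) (syl g))"

definition hcount :: "letter list \<Rightarrow> letter list \<Rightarrow> nat" where
  "hcount w g = (if w = [] \<or> g = [] then 0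
     else card {i. i + length w \<le> length g \<and> take (length w) (drop i g) = w})"

definition Ccount :: "letter list \<Rightarrow> letter list \<Rightarrow> real" where
  "Ccount w g = real (hcount w g) - real (hcount (finv w) g)"

definition Cak :: "nat \<Rightarrow> letter list \<Rightarrow> real" where
  "Cak k g = Ccount (lb @ apow k @ lb) g + Ccount (lb @ apow k @ lbI) g
           + Ccount (lbI @ apow k @ lb) g + Ccount (lbI @ apow k @ lbI) g"

definition Cbk :: "nat \<Rightarrow> letter list \<Rightarrow> real" where
  "Cbk k g = Ccount (la @ bpow k @ la) g + Ccount (la @ bpow k @ laI) g
           + Ccount (laI @ bpow k @ la) g + Ccount (laI @ bpow k @ laI) g"

definition quasimorphism :: "(letter list \<Rightarrow> real) \<Rightarrow> bool" where
  "quasimorphism F \<longleftrightarrow> (\<exists>D. \<forall>g h. reduced g \<longrightarrow> reduced h \<longrightarrow>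
      \<bar>F (fmult g h) - F g - F h\<bar> \<le> D)"

definition homog :: "(letter list \<Rightarrow> real) \<Rightarrow> letter list \<Rightarrow> real" where
  "homog F g = lim (\<lambda>n. F (fpow g n) / real n)"

text \<open>The k-th term (k \<ge> 1) of the series.\<close>
definition sterm :: "(int \<Rightarrow> real) \<Rightarrow> (int \<Rightarrow> real) \<Rightarrow> nat \<Rightarrow> letter list \<Rightarrow> real" where
  "sterm fA fB k g = fA (int k) * Cak k g + fB (int k) * Cbk k g"

definition hterm :: "(int \<Rightarrow> real) \<Rightarrow> (int \<Rightarrow> real) \<Rightarrow> nat \<Rightarrow> letter list \<Rightarrow> real" where
  "hterm fA fB k g = fA (int k) * homog (Cak k) g + fB (int k) * homog (Cbk k) g"

end

theory Submission
  imports Defs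
begin

lemma inv_inv[simp]: "inv_letter (inv_letter x) = x" by (simp add: inv_letter_def)
lemma inv_neq[simp]: "inv_letter x \<noteq> x" "x \<noteq> inv_letter x" by (auto simp: inv_letter_def prod_eq_iff)
lemma fst_inv[simp]: "fst (inv_letter x) = fst x" by (simp add: inv_letter_def)

lemma reduced_Nil[simp]: "reduced []" and reduced_single[simp]: "reduced [x]"
  by (auto simp: reduced_def)
lemma reduced_Cons_Cons[simp]: "reduced (x # y # ys) \<longleftrightarrow> y \<noteq> inv_letter x \<and> reduced (y # ys)"
  by (simp add: reduced_def)
lemma reduced_tl: "reduced (x # ys) \<Longrightarrow> reduced ys"
  by (cases ys) auto

lemma red_cons_reduced: "reduced ys \<Longrightarrow> reduced (red_cons x ys)"
  by (cases ys) (auto dest: reduced_tl)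

lemma foldr_red_reduced: "reduced z \<Longrightarrow> reduced (foldr red_cons xs z)"
  by (induction xs) (auto intro: red_cons_reduced)

lemma reduce_reduced: "reduced (reduce xs)"
  unfolding reduce_def by (rule foldr_red_reduced) simp

lemma reduce_id: "reduced xs \<Longrightarrow> reduce xs = xs"
proof (induction xs)
  case Nil then show ?case by (simp add: reduce_def)
next
  case (Cons x xs)
  then have "reduce xs = xs" using reduced_tl by blast
  then show ?case using Cons.prems by (cases xs) (auto simp: reduce_def)
qed

lemma red_cons_cancel: "reduced t \<Longrightarrow> red_cons x (red_cons (inv_letter x) t) = t"
  by (cases t rule: remdups_adj.cases) auto

lemma red_cons_foldr: "reduced z \<Longrightarrow> foldr red_cons (red_cons x w) z = red_cons x (foldr red_cons w z)"
proof (cases w)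
  case (Cons y w')
  assume z: "reduced z"
  show ?thesis
  proof (cases "y = inv_letter x")
    case True
    then show ?thesis using Cons red_cons_cancel[OF foldr_red_reduced[OF z, of w'], of x] by simp
  qed (use Cons in simp)
qed simp

lemma foldr_foldr: "reduced z \<Longrightarrow> foldr red_cons (foldr red_cons xs []) z = foldr red_cons xs z"
  by (induction xs) (auto simp: red_cons_foldr)

lemma reduce_append_left: "reduce (reduce xs @ ys) = reduce (xs @ ys)"
  unfolding reduce_def by (simp add: foldr_foldr foldr_red_reduced)

lemma reduce_append_right: "reduce (xs @ reduce ys) = reduce (xs @ ys)"
proof -
  have "foldr red_cons (reduce ys) [] = reduce ys" using reduce_id[OF reduce_reduced] by (simp add: reduce_def)
  then show ?thesis by (simp add: reduce_def)
qed

lemma fmult_assoc: "fmult (fmult a b) c = fmult a (fmult b c)"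
  unfolding fmult_def by (metis append_assoc reduce_append_left reduce_append_right)

lemma fmult_Nil: "fmult a [] = reduce a" by (simp add: fmult_def)

lemma fpow_Suc: "fpow g (Suc n) = fmult g (fpow g n)" by (simp add: fpow_def)
lemma fpow_0: "fpow g 0 = []" by (simp add: fpow_def)

lemma fpow_reduced: "reduced (fpow g n)"
  by (cases n) (auto simp: fpow_def fmult_def reduce_reduced)

lemma fpow_add: "fpow g (m + n) = fmult (fpow g m) (fpow g n)"
proof (induction m)
  case 0 then show ?case by (simp add: fpow_0 fmult_def reduce_id fpow_reduced)
next
  case (Suc m) then show ?case by (simp add: fpow_Suc fmult_assoc)
qed

lemma length_red_cons: "length (red_cons x ys) \<le> Suc (length ys)"
  by (cases ys) auto
lemma length_reduce: "length (reduce xs) \<le> length xs"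
  unfolding reduce_def
proof (induction xs)
  case (Cons x xs) then show ?case using length_red_cons[of x "foldr red_cons xs []"] by simp
qed simp

lemma length_fpow: "length (fpow g n) \<le> n * length g"
proof (induction n)
  case 0 then show ?case by (simp add: fpow_0)
next
  case (Suc n)
  have "length (fpow g (Suc n)) \<le> length g + length (fpow g n)"
    using length_reduce[of "g @ fpow g n"] by (simp add: fpow_Suc fmult_def)
  then show ?case using Suc by simp
qed

lemma finv_append: "finv (xs @ ys) = finv ys @ finv xs" by (simp add: finv_def)
lemma finv_Cons: "finv (x # xs) = finv xs @ [inv_letter x]" by (simp add: finv_def)

lemma fmult_decomp:
  assumes "reduced g" "reduced h"
  shows "\<exists>u x v. g = u @ x \<and> h = finv x @ v \<and> foldr red_cons g h = u @ v \<and> reduced (u @ v)"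
  using assms(1)
proof (induction g)
  case Nil then show ?case using assms(2) by (intro exI[of _ "[]"] exI[of _ "[]"] exI[of _ h]) (auto simp: finv_def)
next
  case (Cons l g)
  from Cons.prems have rg: "reduced g" using reduced_tl by blast
  from Cons.IH[OF rg] obtain u x v where uxv: "g = u @ x" "h = finv x @ v"
    "foldr red_cons g h = u @ v" "reduced (u @ v)" by blast
  show ?case
  proof (cases u)
    case (Cons u1 us)
    have "u1 \<noteq> inv_letter l" using Cons.prems uxv(1) Cons by auto
    then show ?thesis using uxv Cons Cons.prems
      by (intro exI[of _ "l # u"] exI[of _ x] exI[of _ v]) auto
  next
    case Nil
    show ?thesis
    proof (cases "\<exists>v'. v = inv_letter l # v'")
      case True
      then obtain v' where v': "v = inv_letter l # v'" by blast
      show ?thesis using uxv Nil v'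
        by (intro exI[of _ "[]"] exI[of _ "l # x"] exI[of _ v']) (auto simp: finv_Cons dest: reduced_tl)
    next
      case False
      then have "red_cons l v = l # v" by (cases v) auto
      moreover have "reduced (l # v)" using False uxv(4) Nil by (cases v) auto
      ultimately show ?thesis using uxv Nil
        by (intro exI[of _ "[l]"] exI[of _ x] exI[of _ v]) auto
    qed
  qed
qed

lemma fmult_decomp':
  assumes "reduced g" "reduced h"
  shows "\<exists>u x v. g = u @ x \<and> h = finv x @ v \<and> fmult g h = u @ v"
proof -
  have "fmult g h = foldr red_cons g h"
    using reduce_id[OF assms(2)] by (simp add: fmult_def reduce_def)
  then show ?thesis using fmult_decomp[OF assms] by metis
qed


fun mrg :: "gen \<times> int \<Rightarrow> (gen \<times> int) list \<Rightarrow> (gen \<times> int) list" where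
  "mrg a [] = [a]"
| "mrg a ((x, k) # r) = (if x = fst a then (x, k + snd a) # r else a # (x, k) # r)"

lemma syl_Cons: "syl (l # ls) = mrg (fst l, lsgn l) (syl ls)"
  by (cases "syl ls") auto

declare syl.simps(2)[simp del]

definition join :: "(gen \<times> int) list \<Rightarrow> (gen \<times> int) list \<Rightarrow> (gen \<times> int) list" where
  "join s t = (if s \<noteq> [] \<and> t \<noteq> [] \<and> fst (last s) = fst (hd t)
     then butlast s @ (fst (hd t), snd (last s) + snd (hd t)) # tl t else s @ t)"

lemma mrg_join: "mrg a (join s t) = join (mrg a s) t"
proof (cases s)
  case Nil then show ?thesis by (cases t) (auto simp: join_def)
next
  case (Cons x r)
  then show ?thesis
    by (cases r; cases t; cases x; cases a) (auto simp: join_def algebra_simps)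
qed

lemma join_Nil[simp]: "join [] t = t" by (simp add: join_def)

lemma syl_append: "syl (p @ q) = join (syl p) (syl q)"
  by (induction p) (simp_all add: syl_Cons mrg_join)

lemma syl_Nil_iff[simp]: "syl p = [] \<longleftrightarrow> p = []"
proof (cases p)
  case (Cons a list) then show ?thesis by (cases "syl list") (auto simp: syl_Cons split: if_splits)
qed simp

definition fv :: "(int \<Rightarrow> real) \<Rightarrow> (int \<Rightarrow> real) \<Rightarrow> gen \<times> int \<Rightarrow> real" where
  "fv fA fB a = (if fst a = GA then fA (snd a) else fB (snd a))"

lemma split_qm_fv: "split_qm fA fB g = sum_list (map (fv fA fB) (syl g))"
  unfolding split_qm_def fv_def by (simp add: case_prod_beta')

lemma lsgn_inv[simp]: "lsgn (inv_letter l) = - lsgn l"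
  by (simp add: lsgn_def inv_letter_def)

definition negs :: "gen \<times> int \<Rightarrow> gen \<times> int" where "negs a = (fst a, - snd a)"

lemma syl_finv: "syl (finv p) = rev (map negs (syl p))"
proof (induction p)
  case Nil then show ?case by (simp add: finv_def)
next
  case (Cons l p)
  have "syl (finv (l # p)) = join (rev (map negs (syl p))) [(fst l, - lsgn l)]"
    by (simp add: finv_Cons syl_append Cons.IH syl_Cons)
  also have "\<dots> = rev (map negs (syl (l # p)))"
    by (cases "syl p" rule: list.exhaust; cases "hd (syl p)")
       (auto simp: join_def syl_Cons negs_def last_rev butlast_rev)
  finally show ?case .
qed

locale qmf =
  fixes fA fB :: "int \<Rightarrow> real" and D :: real
  assumes altA: "\<And>k. fA (- k) = - fA k" and altB: "\<And>k. fB (- k) = - fB k"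
    and qA: "\<And>m n. \<bar>fA (m + n) - fA m - fA n\<bar> \<le> D"
    and qB: "\<And>m n. \<bar>fB (m + n) - fB m - fB n\<bar> \<le> D"
begin

abbreviation S where "S \<equiv> split_qm fA fB"

lemma fv_neg: "fv fA fB (negs a) = - fv fA fB a"
  by (simp add: fv_def negs_def altA altB)

lemma S_finv: "S (finv p) = - S p"
proof -
  have "S (finv p) = sum_list (map (fv fA fB \<circ> negs) (syl p))"
    by (simp add: split_qm_fv syl_finv rev_map[symmetric] sum_list_rev)
  also have "\<dots> = sum_list (map (\<lambda>a. - fv fA fB a) (syl p))"
    by (simp add: comp_def fv_neg)
  also have "\<dots> = - S p" by (simp add: split_qm_fv uminus_sum_list_map comp_def)
  finally show ?thesis .
qed

lemma D_nonneg: "0 \<le> D" using qA[of 0 0] by simp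

lemma S_append: "\<bar>S (p @ q) - S p - S q\<bar> \<le> D"
proof (cases "syl p \<noteq> [] \<and> syl q \<noteq> [] \<and> fst (last (syl p)) = fst (hd (syl q))")
  case True
  obtain s a where s: "syl p = s @ [a]" using True by (metis rev_exhaust)
  obtain b t where t: "syl q = b # t" using True by (metis list.exhaust)
  have eq: "fst a = fst b" using True s t by simp
  have "S (p @ q) - S p - S q = fv fA fB (fst b, snd a + snd b) - fv fA fB a - fv fA fB b"
    using True s t by (simp add: split_qm_fv syl_append join_def)
  then show ?thesis using eq qA qB by (auto simp: fv_def)
next
  case False
  then have "join (syl p) (syl q) = syl p @ syl q" unfolding join_def by argo
  then have "S (p @ q) - S p - S q = 0"
    by (simp add: split_qm_fv syl_append)
  then show ?thesis using D_nonneg by simp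
qed

lemma S_qm: "reduced g \<Longrightarrow> reduced h \<Longrightarrow> \<bar>S (fmult g h) - S g - S h\<bar> \<le> 3 * D"
proof -
  assume rg: "reduced g" and rh: "reduced h"
  obtain u x v where d: "g = u @ x" "h = finv x @ v" "fmult g h = u @ v"
    using fmult_decomp'[OF rg rh] by blast
  have 1: "\<bar>S (u @ x) - S u - S x\<bar> \<le> D" by (rule S_append)
  have 2: "\<bar>S (finv x @ v) - S (finv x) - S v\<bar> \<le> D" by (rule S_append)
  have 3: "\<bar>S (u @ v) - S u - S v\<bar> \<le> D" by (rule S_append)
  show ?thesis using 1 2 3 d S_finv[of x] by simp
qed

lemma S_quasimorphism: "quasimorphism S"
  unfolding quasimorphism_def using S_qm by blast

end


lemma hcount_Nil[simp]: "hcount w [] = 0" by (simp add: hcount_def)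

lemma hcount_Cons:
  assumes "w \<noteq> []"
  shows "hcount w (z # g) = hcount w g + (if \<exists>r. z # g = w @ r then 1 else 0)"
proof -
  let ?P = "\<lambda>h i. i + length w \<le> length h \<and> take (length w) (drop i h) = w"
  have fin: "finite {i. ?P h i}" for h
    by (rule finite_subset[of _ "{..length h}"]) auto
  have eq: "{i. ?P (z # g) i} = (if \<exists>r. z # g = w @ r then {0} else {}) \<union> Suc ` {i. ?P g i}"
  proof (rule set_eqI)
    fix i show "i \<in> {i. ?P (z # g) i} \<longleftrightarrow> i \<in> (if \<exists>r. z # g = w @ r then {0} else {}) \<union> Suc ` {i. ?P g i}"
    proof (cases i)
      case 0
      have "?P (z # g) 0 \<longleftrightarrow> (\<exists>r. z # g = w @ r)"
      proof
        assume h: "?P (z # g) 0"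
        have "z # g = take (length w) (z # g) @ drop (length w) (z # g)" by (rule append_take_drop_id[symmetric])
        also have "take (length w) (z # g) = w" using h by simp
        finally show "\<exists>r. z # g = w @ r" by blast
      next
        assume "\<exists>r. z # g = w @ r"
        then obtain r where "z # g = w @ r" by blast
        then show "?P (z # g) 0" by simp
      qed
      then show ?thesis using 0 by auto
    next
      case (Suc j) then show ?thesis by auto
    qed
  qed
  have "card {i. ?P (z # g) i} = card (if \<exists>r. z # g = w @ r then {0::nat} else {}) + card (Suc ` {i. ?P g i})"
    unfolding eq by (rule card_Un_disjoint) (auto intro: fin)
  also have "card (Suc ` {i. ?P g i}) = card {i. ?P g i}" by (simp add: card_image)
  finally have "card {i. ?P (z # g) i} = card {i. ?P g i} + (if \<exists>r. z # g = w @ r then 1 else 0)"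
    by simp
  moreover have "hcount w g = card {i. ?P g i}"
    using assms by (cases g) (auto simp: hcount_def)
  ultimately show ?thesis using assms by (simp add: hcount_def)
qed

lemma hcount_long: "length g < length w \<Longrightarrow> hcount w g = 0"
  by (auto simp: hcount_def)

lemma finv_nonempty[simp]: "finv w = [] \<longleftrightarrow> w = []" by (simp add: finv_def)

lemma Ccount_Cons:
  assumes "w \<noteq> []"
  shows "Ccount w (z # g) = Ccount w g + of_bool (\<exists>r. z # g = w @ r) - of_bool (\<exists>r. z # g = finv w @ r)"
  using assms by (simp add: Ccount_def hcount_Cons)

lemma Ccount_long: "length g < length w \<Longrightarrow> Ccount w g = 0"
  by (simp add: Ccount_def hcount_long finv_def)

definition CC :: "gen \<Rightarrow> gen \<Rightarrow> nat \<Rightarrow> letter list \<Rightarrow> real" where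
  "CC H G k g = Ccount ((H,False) # replicate k (G,False) @ [(H,False)]) g
              + Ccount ((H,False) # replicate k (G,False) @ [(H,True)]) g
              + Ccount ((H,True) # replicate k (G,False) @ [(H,False)]) g
              + Ccount ((H,True) # replicate k (G,False) @ [(H,True)]) g"

lemma Cak_CC: "Cak k = CC GB GA k"
  by (rule ext) (simp add: Cak_def CC_def apow_def)
lemma Cbk_CC: "Cbk k = CC GA GB k"
  by (rule ext) (simp add: Cbk_def CC_def bpow_def)

definition rp :: "letter \<Rightarrow> nat \<Rightarrow> letter list \<Rightarrow> bool" where
  "rp l k g \<longleftrightarrow> (\<exists>y r. g = replicate k l @ y # r \<and> fst y \<noteq> fst l)"

lemma finv_pat: "finv (x # replicate k l @ [y]) = inv_letter y # replicate k (inv_letter l) @ [inv_letter x]"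
  by (simp add: finv_def)

lemma pref_pat: "(\<exists>r. z # g = (x # replicate k l @ [y]) @ r) \<longleftrightarrow> z = x \<and> (\<exists>r. g = replicate k l @ y # r)"
  by auto

lemma rp_H:
  assumes "fst l = G" "H \<noteq> G"
  shows "rp l k g \<longleftrightarrow> (\<exists>r. g = replicate k l @ (H,False) # r) \<or> (\<exists>r. g = replicate k l @ (H,True) # r)"
proof -
  have eq: "fst y \<noteq> G \<longleftrightarrow> y = (H,False) \<or> y = (H,True)" for y :: letter
  proof -
    obtain a b where y: "y = (a, b)" by (cases y)
    show ?thesis using assms unfolding y by (cases a; cases b; cases H; cases G) auto
  qed
  have "rp l k g \<longleftrightarrow> (\<exists>y r. g = replicate k l @ y # r \<and> (y = (H,False) \<or> y = (H,True)))"
    unfolding rp_def assms(1) eq ..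
  then show ?thesis by blast
qed

lemma Ccount_pat_Cons:
  "Ccount (x # replicate k l @ [y]) (z # g) = Ccount (x # replicate k l @ [y]) g
     + of_bool (z = x \<and> (\<exists>r. g = replicate k l @ y # r))
     - of_bool (z = inv_letter y \<and> (\<exists>r. g = replicate k (inv_letter l) @ inv_letter x # r))"
  by (subst Ccount_Cons) (simp, simp only: finv_pat pref_pat)

lemma CC_Cons:
  assumes "H \<noteq> G"
  shows "CC H G k (z # g) = CC H G k g + of_bool (fst z = H \<and> rp (G,False) k g)
                                       - of_bool (fst z = H \<and> rp (G,True) k g)"
proof -
  define P where "P l y \<longleftrightarrow> (\<exists>r. g = replicate k l @ y # r)" for l y
  have ex: "\<not> (P l (H,False) \<and> P l (H,True))" for l
    unfolding P_def by auto
  have rpF: "rp (G,False) k g \<longleftrightarrow> P (G,False) (H,False) \<or> P (G,False) (H,True)"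
    using rp_H[of "(G,False)" G H] assms unfolding P_def by simp
  have rpT: "rp (G,True) k g \<longleftrightarrow> P (G,True) (H,False) \<or> P (G,True) (H,True)"
    using rp_H[of "(G,True)" G H] assms unfolding P_def by simp
  have fz: "fst z = H \<longleftrightarrow> z = (H,False) \<or> z = (H,True)"
    by (cases z; cases "snd z") auto
  have iv: "inv_letter (H,False) = (H,True)" "inv_letter (H,True) = (H,False)" "inv_letter (G,False) = (G,True)"
    by (simp_all add: inv_letter_def)
  have "CC H G k (z # g) = CC H G k g
     + (of_bool (z = (H,False) \<and> P (G,False) (H,False)) + of_bool (z = (H,False) \<and> P (G,False) (H,True))
      + of_bool (z = (H,True) \<and> P (G,False) (H,False)) + of_bool (z = (H,True) \<and> P (G,False) (H,True)))
     - (of_bool (z = (H,True) \<and> P (G,True) (H,True)) + of_bool (z = (H,False) \<and> P (G,True) (H,True))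
      + of_bool (z = (H,True) \<and> P (G,True) (H,False)) + of_bool (z = (H,False) \<and> P (G,True) (H,False)))"
    unfolding CC_def Ccount_pat_Cons iv P_def by linarith
  also have "\<dots> = CC H G k g + of_bool (fst z = H \<and> rp (G,False) k g) - of_bool (fst z = H \<and> rp (G,True) k g)"
    using ex[of "(G,False)"] ex[of "(G,True)"] unfolding rpF rpT fz
    by (cases "P (G,False) (H,False)"; cases "P (G,False) (H,True)"; cases "P (G,True) (H,False)";
        cases "P (G,True) (H,True)"; cases "z = (H,False)"; cases "z = (H,True)") simp_all
  finally show ?thesis .
qed

lemma CC_Nil[simp]: "CC H G k [] = 0"
  by (simp add: CC_def Ccount_def)

lemma CC_long: "length g < k + 2 \<Longrightarrow> CC H G k g = 0"
  by (simp add: CC_def Ccount_long)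


lemma mrg_ne: "mrg a s \<noteq> []" and fst_hd_mrg: "fst (hd (mrg a s)) = fst a"
  by (cases s; cases "hd s"; auto)+

lemma fst_hd_syl: "rest \<noteq> [] \<Longrightarrow> fst (hd (syl rest)) = fst (hd rest)"
  by (cases rest) (auto simp: syl_Cons fst_hd_mrg)

lemma syl_rep:
  assumes "rest = [] \<or> fst (hd rest) \<noteq> fst l"
  shows "syl (replicate (Suc k) l @ rest) = (fst l, int (Suc k) * lsgn l) # syl rest"
proof (induction k)
  case 0
  show ?case
  proof (cases "syl rest")
    case Nil then show ?thesis by (simp add: syl_Cons)
  next
    case (Cons a t)
    have "rest \<noteq> []" using Cons by auto
    then have "fst a \<noteq> fst l" using assms fst_hd_syl[of rest] Cons by auto
    then show ?thesis using Cons by (cases a) (simp add: syl_Cons)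
  qed
next
  case (Suc k)
  then show ?case by (simp add: syl_Cons algebra_simps)
qed

lemma rp_syl:
  assumes "rp l k g" "k \<ge> 1"
  shows "\<exists>G' e' t. syl g = (fst l, int k * lsgn l) # (G', e') # t \<and> G' \<noteq> fst l"
proof -
  obtain y r where g: "g = replicate k l @ y # r" "fst y \<noteq> fst l" using assms(1) rp_def by blast
  obtain k' where k: "k = Suc k'" using assms(2) by (cases k) auto
  have "syl g = (fst l, int k * lsgn l) # syl (y # r)"
    using syl_rep[of "y # r" l k'] g k by simp
  moreover obtain G' e' t where "syl (y # r) = (G', e') # t"
    by (metis list.exhaust prod.exhaust syl_Nil_iff list.distinct(1))
  moreover have "G' = fst y" using fst_hd_syl[of "y # r"] calculation(2) by simp
  ultimately show ?thesis using g(2) by auto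
qed

lemma lsgn_cases: "lsgn l = 1 \<or> lsgn l = -1" by (simp add: lsgn_def)

lemma rp_unique:
  assumes "rp l k g" "k \<ge> 1" "rp l' k' g" "k' \<ge> 1"
  shows "l = l' \<and> k = k'"
proof -
  obtain G1 e1 t1 where 1: "syl g = (fst l, int k * lsgn l) # (G1, e1) # t1" using rp_syl[OF assms(1,2)] by blast
  obtain G2 e2 t2 where 2: "syl g = (fst l', int k' * lsgn l') # (G2, e2) # t2" using rp_syl[OF assms(3,4)] by blast
  have f: "fst l = fst l'" and e: "int k * lsgn l = int k' * lsgn l'" using 1 2 by auto
  have "lsgn l = lsgn l'"
    using e assms(2,4) lsgn_cases[of l] lsgn_cases[of l'] by auto
  then have "snd l = snd l'" by (auto simp: lsgn_def split: if_splits)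
  then show ?thesis using f e \<open>lsgn l = lsgn l'\<close> lsgn_cases[of l] by (auto simp: prod_eq_iff)
qed

lemma replicate_takeWhile: "takeWhile (\<lambda>x. x = l) g = replicate (length (takeWhile (\<lambda>x. x = l) g)) l"
  by (induction g) auto

lemma syl_rp:
  assumes "reduced g" "syl g = (G, e) # (G', e') # t"
  shows "\<exists>l k. k \<ge> 1 \<and> rp l k g"
proof -
  have "g \<noteq> []" using assms(2) by auto
  then obtain l g1 where g: "g = l # g1" by (cases g) auto
  define k where "k = length (takeWhile (\<lambda>x. x = l) g)"
  define rest where "rest = dropWhile (\<lambda>x. x = l) g"
  have gk: "g = replicate k l @ rest"
    using takeWhile_dropWhile_id[of "\<lambda>x. x = l" g] replicate_takeWhile[of l g]
    unfolding k_def rest_def by simp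
  have k1: "k \<ge> 1" unfolding k_def g by simp
  obtain k' where kk: "k = Suc k'" using k1 by (cases k) auto
  show ?thesis
  proof (cases rest)
    case Nil
    then have "syl g = [(fst l, int k * lsgn l)]" using syl_rep[of "[]" l k'] gk kk by simp
    then show ?thesis using assms(2) by simp
  next
    case (Cons y r)
    have yl: "y \<noteq> l" using hd_dropWhile[of "\<lambda>x. x = l" g] Cons unfolding rest_def by auto
    have "reduced (replicate k' l @ [l, y] @ r)" using assms(1) gk kk Cons
      by (simp add: replicate_append_same[symmetric])
    then have "y \<noteq> inv_letter l" unfolding reduced_def
      by (simp add: successively_append_iff)
    then have "fst y \<noteq> fst l" using yl by (cases y; cases l) (auto simp: inv_letter_def)
    then have "rp l k g" unfolding rp_def using gk Cons by blast
    then show ?thesis using k1 by blast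
  qed
qed

definition dl :: "(int \<Rightarrow> real) \<Rightarrow> (int \<Rightarrow> real) \<Rightarrow> letter \<Rightarrow> (gen \<times> int) list \<Rightarrow> real" where
  "dl fA fB z s = (if 2 \<le> length s \<and> fst (hd s) \<noteq> fst z then fv fA fB (hd s) else 0)"

definition J :: "(int \<Rightarrow> real) \<Rightarrow> (int \<Rightarrow> real) \<Rightarrow> letter list \<Rightarrow> real" where
  "J fA fB g = sum_list (map (fv fA fB) (butlast (tl (syl g))))"

lemma J_Cons: "J fA fB (z # g) = J fA fB g + dl fA fB z (syl g)"
proof (cases "syl g")
  case Nil then show ?thesis by (simp add: J_def dl_def syl_Cons)
next
  case (Cons a t)
  then show ?thesis by (cases a; cases t) (auto simp: J_def dl_def syl_Cons)
qed

definition T :: "(int \<Rightarrow> real) \<Rightarrow> (int \<Rightarrow> real) \<Rightarrow> letter list \<Rightarrow> real" where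
  "T fA fB g = (\<Sum>j. sterm fA fB (Suc j) g)"

lemma sterm_CC: "sterm fA fB (Suc j) g = fA (int (Suc j)) * CC GB GA (Suc j) g + fB (int (Suc j)) * CC GA GB (Suc j) g"
  by (simp add: sterm_def Cak_CC Cbk_CC)

lemma sterm_long: "length g \<le> j \<Longrightarrow> sterm fA fB (Suc j) g = 0"
  by (simp add: sterm_CC CC_long)

lemma sterm_sums: "(\<lambda>j. sterm fA fB (Suc j) g) sums (\<Sum>j<length g. sterm fA fB (Suc j) g)"
  by (rule sums_finite) (auto intro: sterm_long)

lemma sterm_summable: "summable (\<lambda>j. sterm fA fB (Suc j) g)"
  using sterm_sums sums_summable by blast

lemma T_Nil: "T fA fB [] = 0" by (simp add: T_def sterm_CC)


lemma sterm_Cons: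
  "sterm fA fB (Suc j) (z # g) - sterm fA fB (Suc j) g =
     fA (int (Suc j)) * (of_bool (fst z = GB \<and> rp (GA,False) (Suc j) g) - of_bool (fst z = GB \<and> rp (GA,True) (Suc j) g))
   + fB (int (Suc j)) * (of_bool (fst z = GA \<and> rp (GB,False) (Suc j) g) - of_bool (fst z = GA \<and> rp (GB,True) (Suc j) g))"
  by (simp add: sterm_CC CC_Cons algebra_simps)

lemma gen_ne: "G \<noteq> GA \<longleftrightarrow> G = GB" "G \<noteq> GB \<longleftrightarrow> G = GA" by (cases G; simp)+

lemma T_Cons:
  assumes altA: "\<And>k. fA (- k) = - fA k" and altB: "\<And>k. fB (- k) = - fB k"
    and red: "reduced (z # g)"
  shows "T fA fB (z # g) = T fA fB g + dl fA fB z (syl g)"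
proof -
  let ?d = "\<lambda>j. sterm fA fB (Suc j) (z # g) - sterm fA fB (Suc j) g"
  have ds: "?d sums (T fA fB (z # g) - T fA fB g)"
    unfolding T_def by (intro sums_diff summable_sums sterm_summable)
  have rg: "reduced g" using red reduced_tl by blast
  show ?thesis
  proof (cases "2 \<le> length (syl g) \<and> fst (hd (syl g)) \<noteq> fst z")
    case True
    then obtain G e G' e' t where s: "syl g = (G, e) # (G', e') # t"
      by (cases "syl g" rule: remdups_adj.cases) auto
    obtain l k where lk: "k \<ge> 1" "rp l k g" using syl_rp[OF rg s] by blast
    obtain G2 e2 t2 where s2: "syl g = (fst l, int k * lsgn l) # (G2, e2) # t2" using rp_syl[OF lk(2,1)] by blast
    have Ge: "G = fst l" "e = int k * lsgn l" using s s2 by auto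
    have Gz: "fst l \<noteq> fst z" using True s Ge by simp
    have dval: "?d j = (if j = k - 1 then fv fA fB (G, e) else 0)" for j
    proof (cases "Suc j = k")
      case False
      then have "\<not> rp l' (Suc j) g" for l' using rp_unique[OF lk(2,1), of l' "Suc j"] by auto
      moreover have "j \<noteq> k - 1" using False lk(1) by arith
      ultimately show ?thesis by (simp add: sterm_Cons)
    next
      case True
      have rpe: "rp l' (Suc j) g \<longleftrightarrow> l' = l" for l' using rp_unique[OF lk(2,1), of l' "Suc j"] True lk by auto
      obtain G0 b where l: "l = (G0, b)" by (cases l)
      have "?d j = fv fA fB (fst l, int k * lsgn l)"
        using Gz True unfolding sterm_Cons rpe l
        by (cases G0; cases b) (auto simp: fv_def lsgn_def gen_ne altA altB)
      moreover have "j = k - 1" using True by arith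
      ultimately show ?thesis using True Ge by simp
    qed
    have "?d sums fv fA fB (G, e)"
      unfolding dval using sums_single[of "k - 1" "\<lambda>_. fv fA fB (G, e)"] by simp
    then have "T fA fB (z # g) - T fA fB g = fv fA fB (G, e)" using ds sums_unique2 by blast
    then show ?thesis using True s by (simp add: dl_def)
  next
    case False
    have nrp: "\<not> rp l (Suc j) g" if "fst l \<noteq> fst z" for l j
    proof
      assume "rp l (Suc j) g"
      then obtain G2 e2 t2 where "syl g = (fst l, int (Suc j) * lsgn l) # (G2, e2) # t2"
        using rp_syl[of l "Suc j" g] by auto
      then show False using False that by simp
    qed
    have "?d j = 0" for j
      unfolding sterm_Cons using nrp[of "(GA,False)" j] nrp[of "(GA,True)" j] nrp[of "(GB,False)" j] nrp[of "(GB,True)" j]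
      by auto
    then have "T fA fB (z # g) - T fA fB g = 0" using ds sums_unique2 sums_zero by fastforce
    then show ?thesis using False unfolding dl_def by auto
  qed
qed

lemma T_eq_J:
  assumes altA: "\<And>k. fA (- k) = - fA k" and altB: "\<And>k. fB (- k) = - fB k"
  shows "reduced g \<Longrightarrow> T fA fB g = J fA fB g"
proof (induction g)
  case Nil then show ?case by (simp add: T_Nil J_def)
next
  case (Cons z g)
  then show ?case using T_Cons[of fA fB z g, OF altA altB Cons.prems] J_Cons[of fA fB z g] reduced_tl by fastforce
qed

lemma sum_butlast_tl:
  fixes f :: "'a \<Rightarrow> real"
  assumes "\<And>x. \<bar>f x\<bar> \<le> M" "0 \<le> M"
  shows "\<bar>sum_list (map f s) - sum_list (map f (butlast (tl s)))\<bar> \<le> 2 * M"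
proof (cases s)
  case (Cons x t)
  show ?thesis
  proof (cases t rule: rev_cases)
    case Nil then show ?thesis using Cons assms(1)[of x] assms(2) by simp
  next
    case (snoc u y)
    have "sum_list (map f s) - sum_list (map f (butlast (tl s))) = f x + f y"
      using Cons snoc by simp
    then show ?thesis using assms(1)[of x] assms(1)[of y] by simp
  qed
qed (use assms in simp)


lemma qm_seq:
  fixes a :: "nat \<Rightarrow> real"
  assumes q: "\<And>m n. \<bar>a (m + n) - a m - a n\<bar> \<le> D"
  shows "convergent (\<lambda>n. a n / real n)"
proof -
  have D0: "0 \<le> D" using q[of 0 0] by simp
  have a0: "\<bar>a 0\<bar> \<le> D" using q[of 0 0] by simp
  have c1: "\<bar>a (k * m) - real k * a m\<bar> \<le> (real k + 1) * D" for k m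
  proof (induction k)
    case 0 then show ?case using a0 by simp
  next
    case (Suc k)
    have "\<bar>a (m + k * m) - a m - a (k * m)\<bar> \<le> D" by (rule q)
    then show ?case using Suc by (simp add: algebra_simps abs_le_iff)
  qed
  have c2: "\<bar>a (n * m) / real (n * m) - a m / real m\<bar> \<le> 2 * D / real m" if "n \<ge> 1" "m \<ge> 1" for n m
  proof -
    have "\<bar>a (n * m) / real (n * m) - a m / real m\<bar> = \<bar>a (n * m) - real n * a m\<bar> / (real n * real m)"
      using that by (simp add: field_simps)
    also have "\<dots> \<le> (real n + 1) * D / (real n * real m)"
      using that c1[of n m] by (intro divide_right_mono) auto
    also have "\<dots> \<le> (2 * real n) * D / (real n * real m)"
      using that D0 by (intro divide_right_mono mult_right_mono) auto
    also have "\<dots> = 2 * D / real m" using that by simp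
    finally show ?thesis .
  qed
  have c3: "\<bar>a n / real n - a m / real m\<bar> \<le> 2 * D / real m + 2 * D / real n" if "n \<ge> 1" "m \<ge> 1" for n m
    using c2[OF that] c2[OF that(2,1)] by (simp add: mult.commute abs_le_iff)
  have "Cauchy (\<lambda>n. a n / real n)"
  proof (rule CauchyI)
    fix e :: real assume e: "0 < e"
    obtain N :: nat where N: "4 * D / e < real N" using reals_Archimedean2 by blast
    define N' where "N' = Suc N"
    have "\<forall>m\<ge>N'. \<forall>n\<ge>N'. norm (a m / real m - a n / real n) < e"
    proof (intro allI impI)
      fix m n assume m: "N' \<le> m" and n: "N' \<le> n"
      have "2 * D / real n \<le> 2 * D / real N'" "2 * D / real m \<le> 2 * D / real N'"
        using m n D0 by (auto intro!: divide_left_mono simp: N'_def)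
      moreover have "4 * D / real N' < e"
        using N e by (simp add: N'_def field_simps)
      ultimately show "norm (a m / real m - a n / real n) < e"
        using c3[of m n] m n by (simp add: N'_def)
    qed
    then show "\<exists>M. \<forall>m\<ge>M. \<forall>n\<ge>M. norm (a m / real m - a n / real n) < e" by blast
  qed
  then show ?thesis by (simp add: Cauchy_convergent_iff)
qed

lemma qm_homog_conv:
  assumes "quasimorphism F" "reduced g"
  shows "convergent (\<lambda>n. F (fpow g n) / real n)"
proof -
  obtain D where D: "\<And>g h. reduced g \<Longrightarrow> reduced h \<Longrightarrow> \<bar>F (fmult g h) - F g - F h\<bar> \<le> D"
    using assms(1) unfolding quasimorphism_def by blast
  show ?thesis
    by (rule qm_seq[of _ D]) (simp add: fpow_add D fpow_reduced)
qed

locale bqm =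
  fixes fA fB :: "int \<Rightarrow> real" and M :: real
  assumes altA: "\<And>k. fA (- k) = - fA k" and altB: "\<And>k. fB (- k) = - fB k"
    and bA: "\<And>k. \<bar>fA k\<bar> \<le> M" and bB: "\<And>k. \<bar>fB k\<bar> \<le> M"
begin

lemma M0: "0 \<le> M" using bA[of 0] by simp

sublocale qmf fA fB "3 * M"
proof
  show "\<bar>fA (m + n) - fA m - fA n\<bar> \<le> 3 * M" for m n
    using bA[of "m+n"] bA[of m] bA[of n] by (simp add: abs_le_iff)
  show "\<bar>fB (m + n) - fB m - fB n\<bar> \<le> 3 * M" for m n
    using bB[of "m+n"] bB[of m] bB[of n] by (simp add: abs_le_iff)
qed (simp_all add: altA altB)

lemma fv_bd: "\<bar>fv fA fB x\<bar> \<le> M" by (simp add: fv_def bA bB)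

lemma S_T: "reduced g \<Longrightarrow> \<bar>S g - T fA fB g\<bar> \<le> 2 * M"
  using T_eq_J[of fA fB g, OF altA altB] sum_butlast_tl[of "fv fA fB" M "syl g", OF fv_bd M0]
  by (simp add: J_def split_qm_fv)

lemma T_qm: "reduced g \<Longrightarrow> reduced h \<Longrightarrow> \<bar>T fA fB (fmult g h) - T fA fB g - T fA fB h\<bar> \<le> 15 * M"
proof -
  assume g: "reduced g" and h: "reduced h"
  have gh: "reduced (fmult g h)" by (simp add: fmult_def reduce_reduced)
  show ?thesis using S_qm[OF g h] S_T[OF g] S_T[OF h] S_T[OF gh] by (simp add: abs_le_iff)
qed

lemma T_quasimorphism: "quasimorphism (T fA fB)"
  unfolding quasimorphism_def using T_qm by blast

end

definition eI :: "nat \<Rightarrow> int \<Rightarrow> real" where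
  "eI k e = (if e = int k then 1 else if e = - int k then -1 else 0)"

lemma bqm_eI: "k \<ge> 1 \<Longrightarrow> bqm (eI k) (\<lambda>_. 0) 1" "k \<ge> 1 \<Longrightarrow> bqm (\<lambda>_. 0) (eI k) 1"
  by (unfold_locales; auto simp: eI_def)+

lemma T_eI_A: assumes "k \<ge> 1" shows "T (eI k) (\<lambda>_. 0) = Cak k"
proof
  fix g
  have "(\<lambda>j. sterm (eI k) (\<lambda>_. 0) (Suc j) g) = (\<lambda>j. if j = k - 1 then Cak k g else 0)"
  proof
    fix j
    show "sterm (eI k) (\<lambda>_. 0) (Suc j) g = (if j = k - 1 then Cak k g else 0)"
    proof (cases "j = k - 1")
      case True then have "Suc j = k" using assms by arith
      then show ?thesis using True by (simp add: sterm_def eI_def)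
    next
      case False then have "1 + int j \<noteq> int k" using assms by arith
      then show ?thesis using False by (simp add: sterm_def eI_def)
    qed
  qed
  then show "T (eI k) (\<lambda>_. 0) g = Cak k g"
    unfolding T_def using sums_single[of "k - 1" "\<lambda>_. Cak k g"] sums_unique by fastforce
qed

lemma T_eI_B: assumes "k \<ge> 1" shows "T (\<lambda>_. 0) (eI k) = Cbk k"
proof
  fix g
  have "(\<lambda>j. sterm (\<lambda>_. 0) (eI k) (Suc j) g) = (\<lambda>j. if j = k - 1 then Cbk k g else 0)"
  proof
    fix j
    show "sterm (\<lambda>_. 0) (eI k) (Suc j) g = (if j = k - 1 then Cbk k g else 0)"
    proof (cases "j = k - 1")
      case True then have "Suc j = k" using assms by arith
      then show ?thesis using True by (simp add: sterm_def eI_def)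
    next
      case False then have "1 + int j \<noteq> int k" using assms by arith
      then show ?thesis using False by (simp add: sterm_def eI_def)
    qed
  qed
  then show "T (\<lambda>_. 0) (eI k) g = Cbk k g"
    unfolding T_def using sums_single[of "k - 1" "\<lambda>_. Cbk k g"] sums_unique by fastforce
qed

lemma Cak0: "Cak 0 g = 0"
  by (simp add: Cak_def Ccount_def apow_def finv_def inv_letter_def)
lemma Cbk0: "Cbk 0 g = 0"
  by (simp add: Cbk_def Ccount_def bpow_def finv_def inv_letter_def)

lemma Cak_conv: "reduced g \<Longrightarrow> convergent (\<lambda>n. Cak k (fpow g n) / real n)"
proof (cases "k = 0")
  case True then show "convergent (\<lambda>n. Cak k (fpow g n) / real n)" by (simp add: Cak0 convergent_const)
next
  case False
  assume g: "reduced g"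
  interpret bqm "eI k" "\<lambda>_. 0" 1 using bqm_eI False by simp
  show ?thesis using qm_homog_conv[OF T_quasimorphism g] T_eI_A False by simp
qed

lemma Cbk_conv: "reduced g \<Longrightarrow> convergent (\<lambda>n. Cbk k (fpow g n) / real n)"
proof (cases "k = 0")
  case True then show "convergent (\<lambda>n. Cbk k (fpow g n) / real n)" by (simp add: Cbk0 convergent_const)
next
  case False
  assume g: "reduced g"
  interpret bqm "\<lambda>_. 0" "eI k" 1 using bqm_eI False by simp
  show ?thesis using qm_homog_conv[OF T_quasimorphism g] T_eI_B False by simp
qed


lemma tailsum:
  fixes f :: "nat \<Rightarrow> real"
  assumes s: "summable f" and t: "\<And>N. (\<Sum>j\<in>{K..<N}. \<bar>f j\<bar>) \<le> C"
  shows "\<bar>suminf f - (\<Sum>j<K. f j)\<bar> \<le> C"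
proof -
  have ps: "(\<Sum>n<N. \<bar>f (n + K)\<bar>) \<le> C" for N
  proof -
    have "(\<Sum>n<N. \<bar>f (n + K)\<bar>) = (\<Sum>j\<in>{0 + K..<N + K}. \<bar>f j\<bar>)"
      using sum.shift_bounds_nat_ivl[of "\<lambda>j. \<bar>f j\<bar>" 0 K N] by (simp add: atLeast0LessThan)
    also have "\<dots> \<le> C" using t by simp
    finally show ?thesis .
  qed
  have sa: "summable (\<lambda>n. \<bar>f (n + K)\<bar>)"
    by (rule summableI_nonneg_bounded[of _ C]) (auto intro: ps)
  have "\<bar>suminf f - (\<Sum>j<K. f j)\<bar> = \<bar>\<Sum>n. f (n + K)\<bar>"
    using suminf_minus_initial_segment[OF s, of K] by simp
  also have "\<dots> \<le> (\<Sum>n. \<bar>f (n + K)\<bar>)" using summable_norm[of "\<lambda>n. f (n + K)"] sa by simp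
  also have "\<dots> \<le> C" by (rule suminf_le_const[OF sa ps])
  finally show ?thesis .
qed

lemma exch:
  fixes u :: "nat \<Rightarrow> nat \<Rightarrow> real" and v :: "nat \<Rightarrow> real"
  assumes su: "\<And>n. summable (u n)"
    and conv: "\<And>j. (\<lambda>n. u n j) \<longlonglongrightarrow> v j"
    and tail: "\<And>n K N. (\<Sum>j\<in>{K..<N}. \<bar>u n j\<bar>) \<le> B / real (Suc K)"
  shows "summable v \<and> (\<lambda>n. suminf (u n)) \<longlonglongrightarrow> suminf v"
proof -
  have B0: "0 \<le> B" using tail[of 0 0 0] by simp
  have tv: "(\<Sum>j\<in>{K..<N}. \<bar>v j\<bar>) \<le> B / real (Suc K)" for K N
  proof (rule LIMSEQ_le_const2)
    show "(\<lambda>n. \<Sum>j\<in>{K..<N}. \<bar>u n j\<bar>) \<longlonglongrightarrow> (\<Sum>j\<in>{K..<N}. \<bar>v j\<bar>)"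
      by (intro tendsto_sum tendsto_rabs conv)
  qed (use tail in blast)
  have sva: "summable (\<lambda>j. \<bar>v j\<bar>)"
    by (rule summableI_nonneg_bounded[of _ B]) (use tv[of 0] in \<open>auto simp: atLeast0LessThan\<close>)
  have sv: "summable v" using summable_norm_cancel sva by (simp add: summable_norm_cancel)
  have "(\<lambda>n. suminf (u n)) \<longlonglongrightarrow> suminf v"
  proof (rule LIMSEQ_I)
    fix r :: real assume r: "0 < r"
    obtain K :: nat where K: "3 * B / r < real K" using reals_Archimedean2 by blast
    have BK: "B / real (Suc K) < r / 3"
    proof -
      have "3 * B < r * real K" using K r by (simp add: field_simps)
      then have "3 * B < r * real (Suc K)" using r by (simp add: algebra_simps)
      then show ?thesis using r by (simp add: field_simps)
    qed
    have "(\<lambda>n. \<Sum>j<K. u n j) \<longlonglongrightarrow> (\<Sum>j<K. v j)" by (intro tendsto_sum conv)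
    then obtain no where no: "\<And>n. n \<ge> no \<Longrightarrow> norm ((\<Sum>j<K. u n j) - (\<Sum>j<K. v j)) < r / 3"
      using LIMSEQ_D[of _ _ "r/3"] r by (metis divide_pos_pos zero_less_numeral)
    have "norm (suminf (u n) - suminf v) < r" if "n \<ge> no" for n
    proof -
      have 1: "\<bar>suminf (u n) - (\<Sum>j<K. u n j)\<bar> \<le> B / real (Suc K)" by (rule tailsum[OF su tail])
      have 2: "\<bar>suminf v - (\<Sum>j<K. v j)\<bar> \<le> B / real (Suc K)" by (rule tailsum[OF sv tv])
      have 3: "\<bar>(\<Sum>j<K. u n j) - (\<Sum>j<K. v j)\<bar> < r / 3" using no[OF that] by simp
      show ?thesis unfolding real_norm_def using 1 2 3 BK by linarith
    qed
    then show "\<exists>no. \<forall>n\<ge>no. norm (suminf (u n) - suminf v) < r" by blast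
  qed
  then show ?thesis using sv by blast
qed

definition rho :: "letter list \<Rightarrow> real" where
  "rho h = (case syl h of [] \<Rightarrow> 0 | a # _ \<Rightarrow> real_of_int \<bar>snd a\<bar>)"

definition W :: "letter list \<Rightarrow> nat \<Rightarrow> real" where
  "W h j = \<bar>Cak (Suc j) h\<bar> + \<bar>Cbk (Suc j) h\<bar>"

lemma W_Nil: "W [] j = 0" by (simp add: W_def Cak_CC Cbk_CC)

definition cnd :: "letter \<Rightarrow> letter list \<Rightarrow> bool" where
  "cnd z g \<longleftrightarrow> 2 \<le> length (syl g) \<and> fst (hd (syl g)) \<noteq> fst z"

lemma W_step:
  assumes red: "reduced (z # g)"
  shows "W (z # g) j \<le> W g j + of_bool (Suc j = nat \<bar>snd (hd (syl g))\<bar> \<and> cnd z g)"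
proof -
  let ?C = "Suc j = nat \<bar>snd (hd (syl g))\<bar> \<and> cnd z g"
  define i1 where "i1 \<longleftrightarrow> fst z = GB \<and> rp (GA,False) (Suc j) g"
  define i2 where "i2 \<longleftrightarrow> fst z = GB \<and> rp (GA,True) (Suc j) g"
  define i3 where "i3 \<longleftrightarrow> fst z = GA \<and> rp (GB,False) (Suc j) g"
  define i4 where "i4 \<longleftrightarrow> fst z = GA \<and> rp (GB,True) (Suc j) g"
  have imp: "?C" if h1: "fst l \<noteq> fst z" and h2: "rp l (Suc j) g" for l
  proof -
    obtain G2 e2 t2 where "syl g = (fst l, int (Suc j) * lsgn l) # (G2, e2) # t2"
      using rp_syl[OF h2] by auto
    then show ?thesis using h1 lsgn_cases[of l] by (auto simp: cnd_def)
  qed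
  have c1: "i1 \<Longrightarrow> ?C" "i2 \<Longrightarrow> ?C" "i3 \<Longrightarrow> ?C" "i4 \<Longrightarrow> ?C"
    unfolding i1_def i2_def i3_def i4_def
    using imp[of "(GA,False)"] imp[of "(GA,True)"] imp[of "(GB,False)"] imp[of "(GB,True)"] by auto
  have e12: "\<not> (i1 \<and> i2)" unfolding i1_def i2_def using rp_unique[of "(GA,False)" "Suc j" g "(GA,True)" "Suc j"] by auto
  have e34: "\<not> (i3 \<and> i4)" unfolding i3_def i4_def using rp_unique[of "(GB,False)" "Suc j" g "(GB,True)" "Suc j"] by auto
  have eAB: "\<not> ((i1 \<or> i2) \<and> (i3 \<or> i4))" unfolding i1_def i2_def i3_def i4_def by auto
  have "W (z # g) j = \<bar>CC GB GA (Suc j) g + of_bool i1 - of_bool i2\<bar> + \<bar>CC GA GB (Suc j) g + of_bool i3 - of_bool i4\<bar>"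
    unfolding W_def Cak_CC Cbk_CC i1_def i2_def i3_def i4_def by (simp add: CC_Cons)
  also have "\<dots> \<le> W g j + (of_bool i1 + of_bool i2 + of_bool i3 + of_bool i4)"
    unfolding W_def Cak_CC Cbk_CC by (simp add: abs_le_iff) linarith
  also have "of_bool i1 + of_bool i2 + of_bool i3 + of_bool i4 \<le> (of_bool ?C :: real)"
    using c1 e12 e34 eAB by (cases i1; cases i2; cases i3; cases i4) auto
  finally show ?thesis by simp
qed

lemma rho_step: "rho (z # g) \<le> (if cnd z g then 1 else rho g + 1)"
proof (cases "syl g")
  case Nil then show ?thesis by (simp add: rho_def syl_Cons lsgn_def cnd_def)
next
  case (Cons a t)
  then show ?thesis by (cases a) (auto simp: rho_def syl_Cons lsgn_def cnd_def)
qed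

lemma rho_cnd: "cnd z g \<Longrightarrow> rho g = real (nat \<bar>snd (hd (syl g))\<bar>)"
  by (cases "syl g") (auto simp: rho_def cnd_def)

lemma amort: "reduced h \<Longrightarrow> (\<Sum>j<K. real (Suc j) * W h j) + rho h \<le> real (length h)"
proof (induction h)
  case Nil then show ?case by (simp add: W_Nil rho_def)
next
  case (Cons z g)
  have rg: "reduced g" using Cons.prems reduced_tl by blast
  define k0 where "k0 = nat \<bar>snd (hd (syl g))\<bar>"
  have "(\<Sum>j<K. real (Suc j) * W (z # g) j) \<le> (\<Sum>j<K. real (Suc j) * W g j + real (Suc j) * of_bool (Suc j = k0 \<and> cnd z g))"
    by (intro sum_mono) (use W_step[OF Cons.prems] in \<open>simp add: k0_def distrib_left[symmetric] mult_left_mono\<close>)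
  also have "\<dots> = (\<Sum>j<K. real (Suc j) * W g j) + (\<Sum>j<K. real (Suc j) * of_bool (Suc j = k0 \<and> cnd z g))"
    by (simp add: sum.distrib)
  also have "(\<Sum>j<K. real (Suc j) * of_bool (Suc j = k0 \<and> cnd z g)) \<le> (if cnd z g then real k0 else 0)"
  proof -
    have "(\<Sum>j<K. real (Suc j) * of_bool (Suc j = k0 \<and> cnd z g))
        = (\<Sum>j<K. if j = k0 - 1 then (if k0 \<ge> 1 \<and> cnd z g then real k0 else 0) else 0)"
      by (intro sum.cong refl) auto
    also have "\<dots> \<le> (if cnd z g then real k0 else 0)" by auto
    finally show ?thesis .
  qed
  finally have s: "(\<Sum>j<K. real (Suc j) * W (z # g) j) \<le> (\<Sum>j<K. real (Suc j) * W g j) + (if cnd z g then real k0 else 0)"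
    by simp
  show ?case
  proof (cases "cnd z g")
    case True
    then show ?thesis using s rho_step[of z g] rho_cnd[OF True] Cons.IH[OF rg] by (simp add: k0_def)
  next
    case False
    then show ?thesis using s rho_step[of z g] Cons.IH[OF rg] by simp
  qed
qed


lemma rho_nonneg: "0 \<le> rho h" by (cases "syl h") (auto simp: rho_def)

context bqm
begin

lemma sterm_W: "\<bar>sterm fA fB (Suc j) h\<bar> \<le> M * W h j"
proof -
  have "\<bar>sterm fA fB (Suc j) h\<bar> \<le> \<bar>fA (int (Suc j))\<bar> * \<bar>Cak (Suc j) h\<bar> + \<bar>fB (int (Suc j))\<bar> * \<bar>Cbk (Suc j) h\<bar>"
    unfolding sterm_def by (metis abs_mult abs_triangle_ineq of_nat_Suc)
  also have "\<dots> \<le> M * \<bar>Cak (Suc j) h\<bar> + M * \<bar>Cbk (Suc j) h\<bar>"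
    by (intro add_mono mult_right_mono bA bB) auto
  finally show ?thesis by (simp add: W_def distrib_left)
qed

lemma tail_W: "reduced h \<Longrightarrow> (\<Sum>j\<in>{K..<N}. W h j) \<le> real (length h) / real (Suc K)"
proof -
  assume h: "reduced h"
  have W0: "0 \<le> W h j" for j by (simp add: W_def)
  have "real (Suc K) * (\<Sum>j\<in>{K..<N}. W h j) = (\<Sum>j\<in>{K..<N}. real (Suc K) * W h j)"
    by (simp add: sum_distrib_left)
  also have "\<dots> \<le> (\<Sum>j\<in>{K..<N}. real (Suc j) * W h j)"
    by (intro sum_mono mult_right_mono W0) auto
  also have "\<dots> \<le> (\<Sum>j<N. real (Suc j) * W h j)"
    by (intro sum_mono2) (auto intro!: mult_nonneg_nonneg W0)
  also have "\<dots> \<le> real (length h)" using amort[OF h, of N] rho_nonneg[of h] by linarith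
  finally show ?thesis by (simp add: field_simps)
qed

lemma homog_lim:
  assumes g: "reduced g"
  shows "summable (\<lambda>k. hterm fA fB (Suc k) g)
       \<and> (\<lambda>n. split_qm fA fB (fpow g n) / real n) \<longlonglongrightarrow> (\<Sum>k. hterm fA fB (Suc k) g)"
proof -
  define u where "u n j = sterm fA fB (Suc j) (fpow g n) / real n" for n j
  have su: "summable (u n)" for n unfolding u_def by (intro summable_divide sterm_summable)
  have conv: "(\<lambda>n. u n j) \<longlonglongrightarrow> hterm fA fB (Suc j) g" for j
  proof -
    have a: "(\<lambda>n. Cak (Suc j) (fpow g n) / real n) \<longlonglongrightarrow> homog (Cak (Suc j)) g"
      using Cak_conv[OF g] unfolding homog_def convergent_LIMSEQ_iff by blast
    have b: "(\<lambda>n. Cbk (Suc j) (fpow g n) / real n) \<longlonglongrightarrow> homog (Cbk (Suc j)) g"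
      using Cbk_conv[OF g] unfolding homog_def convergent_LIMSEQ_iff by blast
    have "(\<lambda>n. fA (int (Suc j)) * (Cak (Suc j) (fpow g n) / real n) + fB (int (Suc j)) * (Cbk (Suc j) (fpow g n) / real n))
          \<longlonglongrightarrow> hterm fA fB (Suc j) g"
      unfolding hterm_def by (intro tendsto_add tendsto_mult_left a b)
    then show ?thesis unfolding u_def sterm_def by (simp add: add_divide_distrib)
  qed
  have tail: "(\<Sum>j\<in>{K..<N}. \<bar>u n j\<bar>) \<le> (M * real (length g)) / real (Suc K)" for n K N
  proof (cases "n = 0")
    case True then show ?thesis using M0 by (simp add: u_def)
  next
    case False
    have "(\<Sum>j\<in>{K..<N}. \<bar>u n j\<bar>) = (\<Sum>j\<in>{K..<N}. \<bar>sterm fA fB (Suc j) (fpow g n)\<bar>) / real n"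
      unfolding u_def by (simp add: sum_divide_distrib)
    also have "\<dots> \<le> (\<Sum>j\<in>{K..<N}. M * W (fpow g n) j) / real n"
      by (intro divide_right_mono sum_mono sterm_W) auto
    also have "\<dots> = M * (\<Sum>j\<in>{K..<N}. W (fpow g n) j) / real n" by (simp add: sum_distrib_left)
    also have "\<dots> \<le> M * (real (length (fpow g n)) / real (Suc K)) / real n"
      by (intro divide_right_mono mult_left_mono tail_W fpow_reduced M0) auto
    also have "\<dots> \<le> M * (real (n * length g) / real (Suc K)) / real n"
    proof -
      have "real (length (fpow g n)) \<le> real (n * length g)" using length_fpow[of g n] by linarith
      then show ?thesis using M0 by (intro divide_right_mono mult_left_mono) auto
    qed
    also have "\<dots> = (M * real (length g)) / real (Suc K)" using False by simp
    finally show ?thesis .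
  qed
  have ex: "summable (\<lambda>j. hterm fA fB (Suc j) g) \<and> (\<lambda>n. suminf (u n)) \<longlonglongrightarrow> (\<Sum>j. hterm fA fB (Suc j) g)"
    by (rule exch[OF su conv tail])
  have Tn: "suminf (u n) = T fA fB (fpow g n) / real n" for n
    unfolding u_def T_def by (rule suminf_divide[OF sterm_summable])
  have diff: "(\<lambda>n. (split_qm fA fB (fpow g n) - T fA fB (fpow g n)) / real n) \<longlonglongrightarrow> 0"
  proof (rule tendsto_sandwich[of "\<lambda>n. - (2 * M) / real n" _ _ "\<lambda>n. 2 * M / real n"])
    show "\<forall>\<^sub>F n in sequentially. - (2 * M) / real n \<le> (split_qm fA fB (fpow g n) - T fA fB (fpow g n)) / real n"
      using S_T[OF fpow_reduced[of g]] by (intro always_eventually allI divide_right_mono) (auto simp: abs_le_iff, smt (verit))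
    show "\<forall>\<^sub>F n in sequentially. (split_qm fA fB (fpow g n) - T fA fB (fpow g n)) / real n \<le> 2 * M / real n"
      using S_T[OF fpow_reduced[of g]] by (intro always_eventually allI divide_right_mono) (auto simp: abs_le_iff)
  qed (intro lim_const_over_n)+
  have "(\<lambda>n. T fA fB (fpow g n) / real n + (split_qm fA fB (fpow g n) - T fA fB (fpow g n)) / real n)
        \<longlonglongrightarrow> (\<Sum>j. hterm fA fB (Suc j) g) + 0"
    using ex Tn by (intro tendsto_add diff) auto
  then have "(\<lambda>n. split_qm fA fB (fpow g n) / real n) \<longlonglongrightarrow> (\<Sum>j. hterm fA fB (Suc j) g)"
    by (simp add: diff_divide_distrib)
  then show ?thesis using ex by blast
qed

end


lemma reduced_pat:
  assumes "fst x \<noteq> fst l" "fst y \<noteq> fst l" "k \<ge> 1"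
  shows "reduced (x # replicate k l @ [y])"
proof -
  have r: "reduced (replicate k l @ [y])"
  proof (induction k)
    case 0 then show ?case by simp
  next
    case (Suc k)
    then show ?case using assms(2) by (cases k) (auto simp: inv_letter_def prod_eq_iff)
  qed
  show ?thesis using r assms(1,3) by (cases k) (auto simp: inv_letter_def prod_eq_iff)
qed

definition pw :: "letter \<Rightarrow> nat \<Rightarrow> letter \<Rightarrow> letter \<Rightarrow> letter list" where
  "pw l k x y = x # replicate k l @ [y]"

lemma pw_inj: "inj_on (\<lambda>(k, x, y). pw l k x y) X"
proof (rule inj_onI)
  fix a b assume "a \<in> X" "b \<in> X" and e0: "(\<lambda>(k, x, y). pw l k x y) a = (\<lambda>(k, x, y). pw l k x y) b"
  obtain k x y where a: "a = (k, x, y)" by (cases a) auto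
  obtain k' x' y' where b: "b = (k', x', y')" by (cases b) auto
  have e: "pw l k x y = pw l k' x' y'" using e0 a b by simp
  then have "length (pw l k x y) = length (pw l k' x' y')" by simp
  then have kk: "k = k'" by (simp add: pw_def)
  show "a = b" using e kk a b by (simp add: pw_def)
qed

lemma finite_support:
  fixes fA fB :: "int \<Rightarrow> real"
  assumes fin: "finite {k. fA k \<noteq> 0}" "finite {k. fB k \<noteq> 0}"
  shows "\<exists>W c. finite W \<and> (\<forall>w\<in>W. reduced w \<and> w \<noteq> []) \<and>
           (\<forall>g. (\<Sum>w\<in>W. c w * Ccount w g) = T fA fB g)"
proof -
  let ?N = "(\<lambda>k. nat \<bar>k\<bar>) ` ({k. fA k \<noteq> 0} \<union> {k. fB k \<noteq> 0})"
  have "finite ?N" using fin by simp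
  then obtain K where K: "\<forall>n\<in>?N. n < K"
    unfolding finite_nat_set_iff_bounded by (elim exE)
  have zAB: "fA (int (Suc j)) = 0 \<and> fB (int (Suc j)) = 0" if "K \<le> j" for j
  proof (rule ccontr)
    assume "\<not> ?thesis"
    then have "Suc j \<in> ?N" by (auto simp: image_iff intro!: bexI[of _ "int (Suc j)"])
    then have "Suc j < K" using K by blast
    then show False using that by simp
  qed
  have zA: "fA (int (Suc j)) = 0" and zB: "fB (int (Suc j)) = 0" if "K \<le> j" for j
    using zAB[OF that] by auto
  define HA :: "letter set" where "HA = {(GA,False), (GA,True)}"
  define HB :: "letter set" where "HB = {(GB,False), (GB,True)}"
  define IA where "IA = {1..K} \<times> HB \<times> HB"
  define IB where "IB = {1..K} \<times> HA \<times> HA"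
  define WA where "WA = (\<lambda>(k, x, y). pw (GA,False) k x y) ` IA"
  define WB where "WB = (\<lambda>(k, x, y). pw (GB,False) k x y) ` IB"
  define c where "c w = (if w \<in> WA then fA (int (length w - 2)) else fB (int (length w - 2)))" for w
  have finI: "finite IA" "finite IB" by (simp_all add: IA_def IB_def HA_def HB_def)
  have disj: "WA \<inter> WB = {}"
    unfolding WA_def WB_def IA_def IB_def by (auto simp: pw_def)
  have red: "\<forall>w\<in>WA \<union> WB. reduced w \<and> w \<noteq> []"
    unfolding WA_def WB_def IA_def IB_def HA_def HB_def pw_def
    by (auto intro!: reduced_pat)
  have "(\<Sum>w\<in>WA \<union> WB. c w * Ccount w g) = T fA fB g" for g
  proof -
    have sA: "(\<Sum>w\<in>WA. c w * Ccount w g) = (\<Sum>k\<in>{1..K}. fA (int k) * Cak k g)"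
    proof -
      have cA: "c ((\<lambda>(k, x, y). pw (GA,False) k x y) p) = fA (int (fst p))" if "p \<in> IA" for p
      proof -
        obtain k x y where p: "p = (k, x, y)" by (cases p) auto
        have "pw (GA,False) k x y \<in> WA" using that p unfolding WA_def by force
        then show ?thesis using p by (simp add: c_def pw_def)
      qed
      have "(\<Sum>w\<in>WA. c w * Ccount w g) = (\<Sum>p\<in>IA. c ((\<lambda>(k, x, y). pw (GA,False) k x y) p) * Ccount ((\<lambda>(k, x, y). pw (GA,False) k x y) p) g)"
        unfolding WA_def using sum.reindex[OF pw_inj[of "(GA,False)" IA], of "\<lambda>w. c w * Ccount w g"]
        unfolding comp_def .
      also have "\<dots> = (\<Sum>(k, x, y)\<in>IA. fA (int k) * Ccount (pw (GA,False) k x y) g)"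
        by (rule sum.cong[OF refl]) (auto simp: cA)
      also have "\<dots> = (\<Sum>k\<in>{1..K}. fA (int k) * Cak k g)"
        unfolding IA_def sum.cartesian_product[symmetric]
        by (intro sum.cong refl) (simp add: HB_def Cak_def pw_def apow_def algebra_simps)
      finally show ?thesis .
    qed
    have sB: "(\<Sum>w\<in>WB. c w * Ccount w g) = (\<Sum>k\<in>{1..K}. fB (int k) * Cbk k g)"
    proof -
      have cB: "c ((\<lambda>(k, x, y). pw (GB,False) k x y) p) = fB (int (fst p))" if "p \<in> IB" for p
      proof -
        obtain k x y where p: "p = (k, x, y)" by (cases p) auto
        have "pw (GB,False) k x y \<in> WB" using that p unfolding WB_def by force
        then have "pw (GB,False) k x y \<notin> WA" using disj by blast
        then show ?thesis using p by (simp add: c_def pw_def)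
      qed
      have "(\<Sum>w\<in>WB. c w * Ccount w g) = (\<Sum>p\<in>IB. c ((\<lambda>(k, x, y). pw (GB,False) k x y) p) * Ccount ((\<lambda>(k, x, y). pw (GB,False) k x y) p) g)"
        unfolding WB_def using sum.reindex[OF pw_inj[of "(GB,False)" IB], of "\<lambda>w. c w * Ccount w g"]
        unfolding comp_def .
      also have "\<dots> = (\<Sum>(k, x, y)\<in>IB. fB (int k) * Ccount (pw (GB,False) k x y) g)"
        by (rule sum.cong[OF refl]) (auto simp: cB)
      also have "\<dots> = (\<Sum>k\<in>{1..K}. fB (int k) * Cbk k g)"
        unfolding IB_def sum.cartesian_product[symmetric]
        by (intro sum.cong refl) (simp add: HA_def Cbk_def pw_def bpow_def algebra_simps)
      finally show ?thesis .
    qed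
    have "T fA fB g = (\<Sum>j<K. sterm fA fB (Suc j) g)"
      unfolding T_def by (rule suminf_finite) (use zA zB in \<open>auto simp: sterm_def\<close>)
    also have "\<dots> = (\<Sum>k\<in>{1..K}. sterm fA fB k g)"
    proof -
      have "{1..K} = Suc ` {..<K}" by (simp add: image_Suc_lessThan)
      then show ?thesis by (simp add: sum.reindex)
    qed
    also have "\<dots> = (\<Sum>k\<in>{1..K}. fA (int k) * Cak k g) + (\<Sum>k\<in>{1..K}. fB (int k) * Cbk k g)"
      by (simp add: sterm_def sum.distrib)
    finally have "T fA fB g = (\<Sum>w\<in>WA. c w * Ccount w g) + (\<Sum>w\<in>WB. c w * Ccount w g)"
      using sA sB by simp
    moreover have "(\<Sum>w\<in>WA \<union> WB. c w * Ccount w g) = (\<Sum>w\<in>WA. c w * Ccount w g) + (\<Sum>w\<in>WB. c w * Ccount w g)"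
      by (rule sum.union_disjoint) (use finI disj in \<open>simp_all add: WA_def WB_def\<close>)
    ultimately show ?thesis by simp
  qed
  moreover have "finite (WA \<union> WB)" using finI by (simp add: WA_def WB_def)
  ultimately show ?thesis using red by blast
qed

theorem theorem3p25:
  fixes fA fB :: "int \<Rightarrow> real"
  assumes altA: "\<forall>k. fA (- k) = - fA k"
      and altB: "\<forall>k. fB (- k) = - fB k"
      and bddA: "\<exists>M. \<forall>k. \<bar>fA k\<bar> \<le> M"
      and bddB: "\<exists>M. \<forall>k. \<bar>fB k\<bar> \<le> M"
  shows
    "(\<forall>g. reduced g \<longrightarrow> summable (\<lambda>k. sterm fA fB (Suc k) g))
     \<and> quasimorphism (\<lambda>g. \<Sum>k. sterm fA fB (Suc k) g)
     \<and> (\<exists>D. \<forall>g. reduced g \<longrightarrow>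
           \<bar>split_qm fA fB g - (\<Sum>k. sterm fA fB (Suc k) g)\<bar> \<le> D)
     \<and> (\<forall>g. reduced g \<longrightarrow>
           (\<forall>k. convergent (\<lambda>n. Cak k (fpow g n) / real n))
         \<and> (\<forall>k. convergent (\<lambda>n. Cbk k (fpow g n) / real n))
         \<and> summable (\<lambda>k. hterm fA fB (Suc k) g)
         \<and> (\<lambda>n. split_qm fA fB (fpow g n) / real n)
              \<longlonglongrightarrow> (\<Sum>k. hterm fA fB (Suc k) g))
     \<and> (finite {k. fA k \<noteq> 0} \<and> finite {k. fB k \<noteq> 0} \<longrightarrow>
          (\<exists>W c. finite W \<and> (\<forall>w\<in>W. reduced w \<and> w \<noteq> []) \<and>
             (\<exists>D. \<forall>g. reduced g \<longrightarrow>
                \<bar>split_qm fA fB g - (\<Sum>w\<in>W. c w * Ccount w g)\<bar> \<le> D)))"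
proof -
  obtain MA where MA: "\<And>k. \<bar>fA k\<bar> \<le> MA" using bddA by blast
  obtain MB where MB: "\<And>k. \<bar>fB k\<bar> \<le> MB" using bddB by blast
  define M where "M = max MA MB"
  interpret bqm fA fB M
    by unfold_locales (use altA altB MA MB in \<open>auto simp: M_def intro: max.coboundedI1 max.coboundedI2 order_trans\<close>)
  have Teq: "(\<lambda>g. \<Sum>k. sterm fA fB (Suc k) g) = T fA fB" by (simp add: T_def[abs_def])
  have p1: "\<forall>g. reduced g \<longrightarrow> summable (\<lambda>k. sterm fA fB (Suc k) g)" using sterm_summable by blast
  have p2: "quasimorphism (\<lambda>g. \<Sum>k. sterm fA fB (Suc k) g)" unfolding Teq by (rule T_quasimorphism)
  have p3: "\<exists>D. \<forall>g. reduced g \<longrightarrow> \<bar>split_qm fA fB g - (\<Sum>k. sterm fA fB (Suc k) g)\<bar> \<le> D"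
    using S_T unfolding T_def by blast
  have p4: "\<forall>g. reduced g \<longrightarrow>
           (\<forall>k. convergent (\<lambda>n. Cak k (fpow g n) / real n))
         \<and> (\<forall>k. convergent (\<lambda>n. Cbk k (fpow g n) / real n))
         \<and> summable (\<lambda>k. hterm fA fB (Suc k) g)
         \<and> (\<lambda>n. split_qm fA fB (fpow g n) / real n) \<longlonglongrightarrow> (\<Sum>k. hterm fA fB (Suc k) g)"
    using Cak_conv Cbk_conv homog_lim by blast
  have p5: "finite {k. fA k \<noteq> 0} \<and> finite {k. fB k \<noteq> 0} \<longrightarrow>
          (\<exists>W c. finite W \<and> (\<forall>w\<in>W. reduced w \<and> w \<noteq> []) \<and>
             (\<exists>D. \<forall>g. reduced g \<longrightarrow>
                \<bar>split_qm fA fB g - (\<Sum>w\<in>W. c w * Ccount w g)\<bar> \<le> D))"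
  proof
    assume "finite {k. fA k \<noteq> 0} \<and> finite {k. fB k \<noteq> 0}"
    then obtain W c where Wc: "finite W" "\<forall>w\<in>W. reduced w \<and> w \<noteq> []"
      "\<And>g. (\<Sum>w\<in>W. c w * Ccount w g) = T fA fB g"
      using finite_support[of fA fB] by blast
    show "\<exists>W c. finite W \<and> (\<forall>w\<in>W. reduced w \<and> w \<noteq> []) \<and>
             (\<exists>D. \<forall>g. reduced g \<longrightarrow> \<bar>split_qm fA fB g - (\<Sum>w\<in>W. c w * Ccount w g)\<bar> \<le> D)"
      using Wc S_T by metis
  qed
  show ?thesis using p1 p2 p3 p4 p5 by blast
qed


end
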